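(* Every conditional antimatroid is dismantlable, and every ample class of VC-dimension at most $2$ is dismantlable.
   Context: $X$ is a finite set and a concept class is $C\subseteq 2^X$. $Y$ is shattered by $C$ if $\{c\cap Y:c\in C\}=2^Y$; VC-dimension is the maximum size of a shattered set. A cube of $2^X$ is $\{T\cup Z:Z\subseteq Y\}$ with $Y\subseteq X$, $T\subseteq X\setminus Y$ ($Y$ its support); $C$ is ample if every set shattered by $C$ is the support of a cube contained in $C$. $C$ is dismantlable if it admits an ordering $c_1,\dots,c_m$ of all its concepts such that every level set $\{c_1,\dots,c_i\}$ is ample (equivalently, each $c_i$ is a corner of $\{c_1,\dots,c_i\}$, i.e. lies in exactly one inclusion-maximal cube contained in it). A conditional antimatroid is a class $C$ with $\varnothing\in C$, closed under intersection, such that every $c\in C$ is the smallest member of $C$ containing $\mathrm{ex}(c)$, where $\mathrm{ex}(c)=\{x\in c: c\setminus\{x\}\in C\}$ is the set of extremal points of $c$. *)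

theory Defs
  imports Main
begin

definition shatters :: "'a set set \<Rightarrow> 'a set \<Rightarrow> bool" where
  "shatters C Y \<longleftrightarrow> {c \<inter> Y | c. c \<in> C} = Pow Y"

definition vc_dim :: "'a set \<Rightarrow> 'a set set \<Rightarrow> nat" where
  "vc_dim X C = Max {card Y | Y. Y \<subseteq> X \<and> shatters C Y}"

definition cube :: "'a set \<Rightarrow> 'a set \<Rightarrow> 'a set set" where
  "cube Y T = {T \<union> Z | Z. Z \<subseteq> Y}"

definition ample :: "'a set \<Rightarrow> 'a set set \<Rightarrow> bool" where
  "ample X C \<longleftrightarrow>
     (\<forall>Y. Y \<subseteq> X \<and> shatters C Y \<longrightarrow> (\<exists>T. T \<subseteq> X - Y \<and> cube Y T \<subseteq> C))"

definition dismantlable :: "'a set \<Rightarrow> 'a set set \<Rightarrow> bool" where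
  "dismantlable X C \<longleftrightarrow>
     (\<exists>cs. distinct cs \<and> set cs = C \<and>
           (\<forall>i \<in> {1..length cs}. ample X (set (take i cs))))"

definition ex_pts :: "'a set set \<Rightarrow> 'a set \<Rightarrow> 'a set" where
  "ex_pts C c = {x \<in> c. c - {x} \<in> C}"

definition cond_antimatroid :: "'a set set \<Rightarrow> bool" where
  "cond_antimatroid C \<longleftrightarrow>
     {} \<in> C \<and>
     (\<forall>c \<in> C. \<forall>c' \<in> C. c \<inter> c' \<in> C) \<and>
     (\<forall>c \<in> C. \<forall>c' \<in> C. ex_pts C c \<subseteq> c' \<longrightarrow> c \<subseteq> c')"

end

theory Submission
  imports Defs
begin


lemma cube_eq: "cube Y T = {e. T \<subseteq> e \<and> e \<subseteq> T \<union> Y}"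
  unfolding cube_def
proof (intro set_eqI iffI)
  fix e assume "e \<in> {T \<union> Z |Z. Z \<subseteq> Y}"
  then show "e \<in> {e. T \<subseteq> e \<and> e \<subseteq> T \<union> Y}" by auto
next
  fix e assume "e \<in> {e. T \<subseteq> e \<and> e \<subseteq> T \<union> Y}"
  then have "e = T \<union> (e \<inter> Y)" "e \<inter> Y \<subseteq> Y" by auto
  then show "e \<in> {T \<union> Z |Z. Z \<subseteq> Y}" by blast
qed

lemma mem_cube: "e \<in> cube Y T \<longleftrightarrow> T \<subseteq> e \<and> e \<subseteq> T \<union> Y"
  by (simp add: cube_eq)

lemma cube_subset_cube: "cube Y T \<subseteq> cube S U \<longleftrightarrow> U \<subseteq> T \<and> T \<union> Y \<subseteq> U \<union> S"
proof
  assume a: "cube Y T \<subseteq> cube S U"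
  have "T \<in> cube Y T" "T \<union> Y \<in> cube Y T" by (auto simp: mem_cube)
  with a have "T \<in> cube S U" "T \<union> Y \<in> cube S U" by blast+
  then show "U \<subseteq> T \<and> T \<union> Y \<subseteq> U \<union> S" unfolding mem_cube by blast
qed (unfold cube_eq, blast)

lemma shatters_iff: "shatters C Y \<longleftrightarrow> (\<forall>Z\<subseteq>Y. \<exists>c\<in>C. c \<inter> Y = Z)"
proof
  assume "shatters C Y"
  then have e: "{c \<inter> Y | c. c \<in> C} = Pow Y" unfolding shatters_def .
  show "\<forall>Z\<subseteq>Y. \<exists>c\<in>C. c \<inter> Y = Z"
  proof (intro allI impI)
    fix Z assume "Z \<subseteq> Y"
    then have "Z \<in> {c \<inter> Y | c. c \<in> C}" using e by simp
    then show "\<exists>c\<in>C. c \<inter> Y = Z" by blast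
  qed
next
  assume a: "\<forall>Z\<subseteq>Y. \<exists>c\<in>C. c \<inter> Y = Z"
  have "{c \<inter> Y | c. c \<in> C} = Pow Y"
  proof
    show "{c \<inter> Y | c. c \<in> C} \<subseteq> Pow Y" by blast
    show "Pow Y \<subseteq> {c \<inter> Y | c. c \<in> C}"
    proof
      fix Z assume "Z \<in> Pow Y"
      then obtain c where "c \<in> C" "c \<inter> Y = Z" using a by blast
      then show "Z \<in> {c \<inter> Y | c. c \<in> C}" by blast
    qed
  qed
  then show "shatters C Y" unfolding shatters_def .
qed

lemma shatters_mono: "shatters D Y \<Longrightarrow> D \<subseteq> E \<Longrightarrow> shatters E Y"
  unfolding shatters_iff by (meson subsetD)

lemma shatters_subset_X: "shatters D Y \<Longrightarrow> D \<subseteq> Pow X \<Longrightarrow> Y \<subseteq> X"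
proof -
  assume "shatters D Y" "D \<subseteq> Pow X"
  then obtain c where "c \<in> D" "c \<inter> Y = Y" unfolding shatters_iff by blast
  then show "Y \<subseteq> X" using \<open>D \<subseteq> Pow X\<close> by blast
qed

lemma shatters_single: "a \<in> D \<Longrightarrow> b \<in> D \<Longrightarrow> z \<in> a \<Longrightarrow> z \<notin> b \<Longrightarrow> shatters D {z}"
  unfolding shatters_iff by (auto simp: subset_singleton_iff)

lemma shatters_pair:
  assumes "x \<noteq> z" "\<And>bx bz. \<exists>c\<in>D. (x \<in> c \<longleftrightarrow> bx) \<and> (z \<in> c \<longleftrightarrow> bz)"
  shows "shatters D {x, z}"
  unfolding shatters_iff
proof (intro allI impI)
  fix Z assume "Z \<subseteq> {x, z}"
  obtain c where "c \<in> D" "(x \<in> c \<longleftrightarrow> x \<in> Z)" "(z \<in> c \<longleftrightarrow> z \<in> Z)" using assms(2) by blast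
  then show "\<exists>c\<in>D. c \<inter> {x, z} = Z" using \<open>Z \<subseteq> {x, z}\<close> by (intro bexI[of _ c]) auto
qed

lemma shatters_empty_class: "\<not> shatters {} Y"
  unfolding shatters_iff by blast

lemma ample_empty: "ample X {}"
  unfolding ample_def using shatters_empty_class by blast

lemma ample_edge:
  assumes "ample X D" "z \<in> X" "shatters D {z}"
  shows "\<exists>T. z \<notin> T \<and> T \<in> D \<and> insert z T \<in> D"
proof -
  have "{z} \<subseteq> X \<and> shatters D {z}" using assms by simp
  then obtain T where "T \<subseteq> X - {z}" "cube {z} T \<subseteq> D" using assms(1) unfolding ample_def by (elim allE[of _ "{z}"]) blast
  moreover have "T \<in> cube {z} T" "insert z T \<in> cube {z} T" unfolding mem_cube by auto
  ultimately show ?thesis by blast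
qed

definition flip :: "'a \<Rightarrow> 'a set \<Rightarrow> 'a set" where
  "flip x d = (if x \<in> d then d - {x} else insert x d)"

definition half :: "'a \<Rightarrow> bool \<Rightarrow> 'a set set \<Rightarrow> 'a set set" where
  "half x s D = {d \<in> D. (x \<in> d) = s}"

definition bd :: "'a \<Rightarrow> bool \<Rightarrow> 'a set set \<Rightarrow> 'a set set" where
  "bd x s D = {d \<in> D. (x \<in> d) = s \<and> flip x d \<in> D}"

definition VCle :: "'a set \<Rightarrow> nat \<Rightarrow> 'a set set \<Rightarrow> bool" where
  "VCle X k D \<longleftrightarrow> (\<forall>Y. Y \<subseteq> X \<and> shatters D Y \<longrightarrow> card Y \<le> k)"

definition corner :: "'a set \<Rightarrow> 'a set set \<Rightarrow> 'a set \<Rightarrow> bool" where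
  "corner X D c \<longleftrightarrow> c \<in> D \<and> (\<exists>S U. U \<subseteq> X - S \<and> c \<in> cube S U \<and> cube S U \<subseteq> D \<and>
     (\<forall>Y T. T \<subseteq> X - Y \<and> cube Y T \<subseteq> D \<and> c \<in> cube Y T \<longrightarrow> cube Y T \<subseteq> cube S U))"

lemma VCle_mono: "VCle X k D \<Longrightarrow> E \<subseteq> D \<Longrightarrow> VCle X k E"
  unfolding VCle_def using shatters_mono by blast

lemma flip_in: "x \<in> flip x d \<longleftrightarrow> x \<notin> d" by (simp add: flip_def)
lemma flip_other: "y \<noteq> x \<Longrightarrow> y \<in> flip x d \<longleftrightarrow> y \<in> d" by (auto simp: flip_def)
lemma flip_flip: "flip x (flip x d) = d" by (auto simp: flip_def)



definition ssets :: "'a set \<Rightarrow> 'a set set \<Rightarrow> 'a set set" where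
  "ssets X D = {Y. Y \<subseteq> X \<and> (\<exists>T. T \<subseteq> X - Y \<and> cube Y T \<subseteq> D)}"
definition shsets :: "'a set \<Rightarrow> 'a set set \<Rightarrow> 'a set set" where
  "shsets X D = {Y. Y \<subseteq> X \<and> shatters D Y}"
definition proj :: "'a \<Rightarrow> 'a set set \<Rightarrow> 'a set set" where
  "proj x D = (\<lambda>d. d - {x}) ` D"
definition red :: "'a \<Rightarrow> 'a set set \<Rightarrow> 'a set set" where
  "red x D = {e \<in> D. x \<notin> e \<and> insert x e \<in> D}"

lemma finite_ssets: "finite X \<Longrightarrow> finite (ssets X D)"
  by (rule finite_subset[of _ "Pow X"]) (auto simp: ssets_def)
lemma finite_shsets: "finite X \<Longrightarrow> finite (shsets X D)"
  by (rule finite_subset[of _ "Pow X"]) (auto simp: shsets_def)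

lemma proj_Pow: "D \<subseteq> Pow X \<Longrightarrow> proj x D \<subseteq> Pow (X - {x})"
  by (auto simp: proj_def)
lemma red_Pow: "D \<subseteq> Pow X \<Longrightarrow> red x D \<subseteq> Pow (X - {x})"
  by (auto simp: red_def)

lemma card_split:
  assumes "finite D"
  shows "card D = card (proj x D) + card (red x D)"
proof -
  define Dm where "Dm = {d\<in>D. x \<notin> d}"
  define Dp where "Dp = {d\<in>D. x \<in> d}"
  define P where "P = (\<lambda>d. d - {x}) ` Dp"
  have D: "D = Dm \<union> Dp" unfolding Dm_def Dp_def by blast
  have fm: "finite Dm" "finite Dp" using assms unfolding Dm_def Dp_def by simp_all
  have dj: "Dm \<inter> Dp = {}" unfolding Dm_def Dp_def by blast
  have cD: "card D = card Dm + card Dp"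
    using card_Un_disjoint[OF fm dj] D by simp
  have inj: "inj_on (\<lambda>d. d - {x}) Dp"
  proof
    fix a b assume "a \<in> Dp" "b \<in> Dp" "a - {x} = b - {x}"
    then have "x \<in> a" "x \<in> b" unfolding Dp_def by auto
    then show "a = b" using \<open>a - {x} = b - {x}\<close> by (metis insert_Diff)
  qed
  have cP: "card P = card Dp" unfolding P_def using card_image[OF inj] .
  have pr: "proj x D = Dm \<union> P"
  proof
    show "proj x D \<subseteq> Dm \<union> P"
    proof
      fix e assume "e \<in> proj x D"
      then obtain d where d: "d \<in> D" "e = d - {x}" unfolding proj_def by blast
      show "e \<in> Dm \<union> P"
      proof (cases "x \<in> d")
        case True
        then have "d \<in> Dp" using d unfolding Dp_def by simp
        then show ?thesis using d unfolding P_def by blast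
      next
        case False
        then have "e = d" "d \<in> Dm" using d unfolding Dm_def by auto
        then show ?thesis by simp
      qed
    qed
    show "Dm \<union> P \<subseteq> proj x D"
    proof
      fix e assume "e \<in> Dm \<union> P"
      then consider "e \<in> Dm" | "e \<in> P" by blast
      then show "e \<in> proj x D"
      proof cases
        case 1
        then have "e \<in> D" "e = e - {x}" unfolding Dm_def by auto
        then show ?thesis unfolding proj_def by blast
      next
        case 2
        then obtain d where "d \<in> Dp" "e = d - {x}" unfolding P_def by blast
        then show ?thesis unfolding proj_def Dp_def by blast
      qed
    qed
  qed
  have rd: "red x D = Dm \<inter> P"
  proof
    show "red x D \<subseteq> Dm \<inter> P"
    proof
      fix e assume "e \<in> red x D"
      then have "e \<in> Dm" "insert x e \<in> Dp" "e = insert x e - {x}" unfolding red_def Dm_def Dp_def by auto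
      then show "e \<in> Dm \<inter> P" unfolding P_def by blast
    qed
    show "Dm \<inter> P \<subseteq> red x D"
    proof
      fix e assume "e \<in> Dm \<inter> P"
      then obtain d where "d \<in> Dp" "e = d - {x}" "e \<in> Dm" unfolding P_def by blast
      then have "d = insert x e" "d \<in> D" "e \<in> D" "x \<notin> e" unfolding Dp_def Dm_def by auto
      then show "e \<in> red x D" unfolding red_def by simp
    qed
  qed
  have fP: "finite P" unfolding P_def using fm by simp
  have "card (Dm \<union> P) + card (Dm \<inter> P) = card Dm + card P"
    using card_Un_Int[OF fm(1) fP] by simp
  then show ?thesis using cD cP pr rd by simp
qed

lemma ss_split:
  assumes "x \<in> X"
  shows "ssets X D \<subseteq> ssets (X - {x}) (proj x D) \<union> insert x ` ssets (X - {x}) (red x D)"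
proof
  fix Y assume "Y \<in> ssets X D"
  then obtain T where Y: "Y \<subseteq> X" and T: "T \<subseteq> X - Y" and cub: "cube Y T \<subseteq> D"
    unfolding ssets_def by blast
  show "Y \<in> ssets (X - {x}) (proj x D) \<union> insert x ` ssets (X - {x}) (red x D)"
  proof (cases "x \<in> Y")
    case False
    have "cube Y (T - {x}) \<subseteq> proj x D"
    proof
      fix e assume e: "e \<in> cube Y (T - {x})"
      let ?e = "e \<union> (T \<inter> {x})"
      have "?e \<in> cube Y T" using e by (auto simp: mem_cube)
      then have "?e \<in> D" using cub by blast
      moreover have "e = ?e - {x}" using e False by (auto simp: mem_cube)
      ultimately show "e \<in> proj x D" unfolding proj_def by blast
    qed
    moreover have "Y \<subseteq> X - {x}" "T - {x} \<subseteq> X - {x} - Y" using Y T False by auto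
    ultimately have "Y \<in> ssets (X - {x}) (proj x D)" unfolding ssets_def by blast
    then show ?thesis by blast
  next
    case True
    have xT: "x \<notin> T" using T True by auto
    have "cube (Y - {x}) T \<subseteq> red x D"
    proof
      fix e assume e: "e \<in> cube (Y - {x}) T"
      have "e \<in> cube Y T" "insert x e \<in> cube Y T" using e True by (auto simp: mem_cube)
      moreover have "x \<notin> e" using e xT by (auto simp: mem_cube)
      ultimately show "e \<in> red x D" using cub unfolding red_def by blast
    qed
    moreover have "Y - {x} \<subseteq> X - {x}" "T \<subseteq> X - {x} - (Y - {x})" using Y T xT by auto
    ultimately have "Y - {x} \<in> ssets (X - {x}) (red x D)" unfolding ssets_def by blast
    moreover have "Y = insert x (Y - {x})" using True by auto
    ultimately show ?thesis by blast
  qed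
qed

lemma sh_split1:
  assumes "Y \<in> shsets (X - {x}) (proj x D)"
  shows "Y \<in> shsets X D"
proof -
  have Y: "Y \<subseteq> X - {x}" and sh: "shatters (proj x D) Y" using assms unfolding shsets_def by auto
  have "shatters D Y" unfolding shatters_iff
  proof (intro allI impI)
    fix Z assume "Z \<subseteq> Y"
    then obtain c where "c \<in> proj x D" "c \<inter> Y = Z" using sh unfolding shatters_iff by blast
    then obtain d where d: "d \<in> D" "c = d - {x}" unfolding proj_def by blast
    have "d \<inter> Y = c \<inter> Y" using d(2) Y by blast
    then show "\<exists>c\<in>D. c \<inter> Y = Z" using \<open>c \<inter> Y = Z\<close> d(1) by blast
  qed
  moreover have "Y \<subseteq> X" using Y by blast
  ultimately show ?thesis unfolding shsets_def by simp
qed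

lemma sh_split2:
  assumes "Y \<in> shsets (X - {x}) (red x D)" "x \<in> X"
  shows "insert x Y \<in> shsets X D"
proof -
  have Y: "Y \<subseteq> X - {x}" and sh: "shatters (red x D) Y" using assms unfolding shsets_def by auto
  have "shatters D (insert x Y)" unfolding shatters_iff
  proof (intro allI impI)
    fix Z assume Z: "Z \<subseteq> insert x Y"
    have "Z - {x} \<subseteq> Y" using Z by blast
    then obtain e where e: "e \<in> red x D" "e \<inter> Y = Z - {x}" using sh unfolding shatters_iff by blast
    then have eD: "e \<in> D" "x \<notin> e" "insert x e \<in> D" unfolding red_def by auto
    show "\<exists>c\<in>D. c \<inter> insert x Y = Z"
    proof (cases "x \<in> Z")
      case True
      have "insert x e \<inter> insert x Y = insert x (e \<inter> Y)" by blast
      also have "\<dots> = Z" using True e(2) by blast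
      finally show ?thesis using eD(3) by blast
    next
      case False
      have "e \<inter> insert x Y = e \<inter> Y" using eD(2) by blast
      also have "\<dots> = Z" using False e(2) by blast
      finally show ?thesis using eD(1) by blast
    qed
  qed
  moreover have "insert x Y \<subseteq> X" using Y assms(2) by blast
  ultimately show ?thesis unfolding shsets_def by simp
qed

lemma sh_split:
  assumes "x \<in> X"
  shows "shsets (X - {x}) (proj x D) \<union> insert x ` shsets (X - {x}) (red x D) \<subseteq> shsets X D"
proof
  fix Y assume "Y \<in> shsets (X - {x}) (proj x D) \<union> insert x ` shsets (X - {x}) (red x D)"
  then show "Y \<in> shsets X D"
  proof
    assume "Y \<in> shsets (X - {x}) (proj x D)"
    then show ?thesis by (rule sh_split1)
  next
    assume "Y \<in> insert x ` shsets (X - {x}) (red x D)"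
    then obtain Y' where "Y' \<in> shsets (X - {x}) (red x D)" "Y = insert x Y'" by blast
    then show ?thesis using sh_split2[OF _ assms] by simp
  qed
qed

lemma card_insert_image:
  assumes "finite A" "\<forall>Y\<in>A. x \<notin> Y"
  shows "card (insert x ` A) = card A"
proof -
  have "inj_on (insert x) A" using assms(2) unfolding inj_on_def
    by (metis Diff_insert_absorb)
  then show ?thesis by (rule card_image)
qed

lemma card_split_sets:
  assumes "finite X" "x \<in> X" "A \<subseteq> Pow (X - {x})" "B \<subseteq> Pow (X - {x})"
  shows "card (A \<union> insert x ` B) = card A + card B"
proof -
  note that = assms(3,4)
  have fA: "finite A" and fB: "finite B" using that assms(1)
    by (meson finite_Diff finite_Pow_iff finite_subset)+
  have "A \<inter> insert x ` B = {}" using that by auto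
  then have "card (A \<union> insert x ` B) = card A + card (insert x ` B)"
    using fA fB by (intro card_Un_disjoint) auto
  also have "card (insert x ` B) = card B" using fB that by (intro card_insert_image) auto
  finally show ?thesis .
qed

lemma ssets_Pow: "ssets X D \<subseteq> Pow X" by (auto simp: ssets_def)
lemma shsets_Pow: "shsets X D \<subseteq> Pow X" by (auto simp: shsets_def)

lemma pajor:
  assumes "finite X" "D \<subseteq> Pow X"
  shows "card D \<le> card (shsets X D)"
  using assms
proof (induction X arbitrary: D rule: finite_psubset_induct)
  case (psubset X)
  show ?case
  proof (cases "X = {}")
    case True
    then have "D \<subseteq> {{}}" using psubset.prems by simp
    then consider "D = {}" | "D = {{}}" by blast
    then show ?thesis
    proof cases
      case 2
      have "shatters D {}" using 2 unfolding shatters_iff by auto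
      then have "{} \<in> shsets X D" unfolding shsets_def by auto
      then have "shsets X D \<noteq> {}" by blast
      then have "card (shsets X D) \<ge> 1" using finite_shsets[OF psubset.hyps(1)]
        by (simp add: Suc_leI card_gt_0_iff)
      then show ?thesis using 2 by simp
    qed simp
  next
    case False
    then obtain x where x: "x \<in> X" by blast
    have fD: "finite D" using psubset.prems psubset.hyps(1) by (meson finite_Pow_iff finite_subset)
    have lt: "X - {x} \<subset> X" using x by auto
    have IH1: "card (proj x D) \<le> card (shsets (X - {x}) (proj x D))"
      using psubset.IH[OF lt] proj_Pow[OF psubset.prems] by blast
    have IH2: "card (red x D) \<le> card (shsets (X - {x}) (red x D))"
      using psubset.IH[OF lt] red_Pow[OF psubset.prems] by blast
    have "card D = card (proj x D) + card (red x D)" using card_split[OF fD] .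
    also have "\<dots> \<le> card (shsets (X - {x}) (proj x D)) + card (shsets (X - {x}) (red x D))"
      using IH1 IH2 by simp
    also have "\<dots> = card (shsets (X - {x}) (proj x D) \<union> insert x ` shsets (X - {x}) (red x D))"
      by (rule card_split_sets[symmetric, OF psubset.hyps(1) x shsets_Pow shsets_Pow])
    also have "\<dots> \<le> card (shsets X D)"
      using sh_split[OF x] finite_shsets[OF psubset.hyps(1)] by (rule card_mono[rotated])
    finally show ?thesis .
  qed
qed

lemma ss_le:
  assumes "finite X" "D \<subseteq> Pow X"
  shows "card (ssets X D) \<le> card D"
  using assms
proof (induction X arbitrary: D rule: finite_psubset_induct)
  case (psubset X)
  have fD: "finite D" using psubset.prems psubset.hyps(1) by (meson finite_Pow_iff finite_subset)
  show ?case
  proof (cases "X = {}")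
    case True
    have "ssets X D \<subseteq> {{}}" using True ssets_Pow[of X D] by simp
    show ?thesis
    proof (cases "D = {}")
      case True
      have "ssets X D = {}"
      proof (rule ccontr)
        assume "ssets X D \<noteq> {}"
        then obtain Y T where "cube Y T \<subseteq> D" unfolding ssets_def by blast
        moreover have "T \<in> cube Y T" unfolding mem_cube by blast
        ultimately show False using True by blast
      qed
      then show ?thesis by simp
    next
      case False
      then have "card D \<ge> 1" using fD by (simp add: Suc_leI card_gt_0_iff)
      moreover have "card (ssets X D) \<le> card {{}::'a set}" using \<open>ssets X D \<subseteq> {{}}\<close>
        by (intro card_mono) auto
      ultimately show ?thesis by simp
    qed
  next
    case False
    then obtain x where x: "x \<in> X" by blast
    have lt: "X - {x} \<subset> X" using x by auto
    have IH1: "card (ssets (X - {x}) (proj x D)) \<le> card (proj x D)"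
      using psubset.IH[OF lt] proj_Pow[OF psubset.prems] by blast
    have IH2: "card (ssets (X - {x}) (red x D)) \<le> card (red x D)"
      using psubset.IH[OF lt] red_Pow[OF psubset.prems] by blast
    have "card (ssets X D) \<le> card (ssets (X - {x}) (proj x D) \<union> insert x ` ssets (X - {x}) (red x D))"
      using ss_split[OF x] finite_ssets[of "X - {x}"] psubset.hyps(1)
      by (intro card_mono) auto
    also have "\<dots> = card (ssets (X - {x}) (proj x D)) + card (ssets (X - {x}) (red x D))"
      by (rule card_split_sets[OF psubset.hyps(1) x ssets_Pow ssets_Pow])
    also have "\<dots> \<le> card D" using IH1 IH2 card_split[OF fD, of x] by simp
    finally show ?thesis .
  qed
qed



lemma ssetsI: "Y \<subseteq> X \<Longrightarrow> T \<subseteq> X - Y \<Longrightarrow> cube Y T \<subseteq> D \<Longrightarrow> Y \<in> ssets X D"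
  unfolding ssets_def by blast

lemma ssetsE:
  assumes "Y \<in> ssets X D"
  obtains T where "Y \<subseteq> X" "T \<subseteq> X - Y" "cube Y T \<subseteq> D"
  using assms unfolding ssets_def by auto


lemma ss_eq_ample:
  assumes "finite X" "D \<subseteq> Pow X" "card (ssets X D) = card D"
  shows "ample X D"
  using assms
proof (induction X arbitrary: D rule: finite_psubset_induct)
  case (psubset X)
  have fX: "finite X" by fact
  have fD: "finite D" using psubset.prems(1) fX by (meson finite_Pow_iff finite_subset)
  show "ample X D" unfolding ample_def
  proof (intro allI impI)
    fix Y assume "Y \<subseteq> X \<and> shatters D Y"
    then have Y: "Y \<subseteq> X" and sh: "shatters D Y" by auto
    show "\<exists>T. T \<subseteq> X - Y \<and> cube Y T \<subseteq> D"
    proof (cases "Y = X")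
      case True
      have "cube X {} \<subseteq> D"
      proof
        fix e assume "e \<in> cube X {}"
        then have "e \<subseteq> X" unfolding mem_cube by simp
        then obtain c where "c \<in> D" "c \<inter> X = e" using sh True unfolding shatters_iff by blast
        moreover have "c \<subseteq> X" using \<open>c \<in> D\<close> psubset.prems(1) by blast
        ultimately show "e \<in> D" by (simp add: Int_absorb2)
      qed
      then show ?thesis using True by blast
    next
      case False
      then obtain x where x: "x \<in> X" "x \<notin> Y" using Y by blast
      define P where "P = proj x D"
      define R where "R = red x D"
      have lt: "X - {x} \<subset> X" using x by auto
      have PP: "P \<subseteq> Pow (X - {x})" unfolding P_def by (rule proj_Pow[OF psubset.prems(1)])
      have RP: "R \<subseteq> Pow (X - {x})" unfolding R_def by (rule red_Pow[OF psubset.prems(1)])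
      have fX': "finite (X - {x})" using fX by simp
      let ?B = "ssets (X - {x}) P \<union> insert x ` ssets (X - {x}) R"
      have sub: "ssets X D \<subseteq> ?B" unfolding P_def R_def by (rule ss_split[OF x(1)])
      have fB: "finite ?B" using finite_ssets[OF fX'] by simp
      have a2: "card ?B = card (ssets (X - {x}) P) + card (ssets (X - {x}) R)"
        by (rule card_split_sets[OF fX x(1) ssets_Pow ssets_Pow])
      have a3: "card (ssets (X - {x}) P) \<le> card P" by (rule ss_le[OF fX' PP])
      have a4: "card (ssets (X - {x}) R) \<le> card R" by (rule ss_le[OF fX' RP])
      have a5: "card D = card P + card R" unfolding P_def R_def by (rule card_split[OF fD])
      have a1: "card (ssets X D) \<le> card ?B" by (rule card_mono[OF fB sub])
      have eqP: "card (ssets (X - {x}) P) = card P" using a1 a2 a3 a4 a5 psubset.prems(2) by linarith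
      have eqB: "ssets X D = ?B"
        using card_seteq[OF fB sub] a2 a3 a4 a5 psubset.prems(2) by linarith
      have ampP: "ample (X - {x}) P" by (rule psubset.IH[OF lt PP eqP])
      have shP: "shatters P Y" unfolding shatters_iff
      proof (intro allI impI)
        fix Z assume "Z \<subseteq> Y"
        then obtain c where c: "c \<in> D" "c \<inter> Y = Z" using sh unfolding shatters_iff by blast
        have "c - {x} \<in> P" unfolding P_def proj_def using c(1) by blast
        moreover have "(c - {x}) \<inter> Y = Z" using c(2) x(2) by blast
        ultimately show "\<exists>c\<in>P. c \<inter> Y = Z" by blast
      qed
      have Y': "Y \<subseteq> X - {x}" using Y x(2) by blast
      have "\<exists>T. T \<subseteq> X - {x} - Y \<and> cube Y T \<subseteq> P"
        using ampP Y' shP unfolding ample_def by (elim allE[of _ Y]) blast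
      then obtain T where "T \<subseteq> X - {x} - Y" "cube Y T \<subseteq> P" by blast
      then have "Y \<in> ssets (X - {x}) P" using Y' by (intro ssetsI)
      then have "Y \<in> ssets X D" using eqB by blast
      then obtain T where "T \<subseteq> X - Y" "cube Y T \<subseteq> D" by (rule ssetsE)
      then show ?thesis by blast
    qed
  qed
qed

lemma ample_shsets_sub:
  assumes "ample X D"
  shows "shsets X D \<subseteq> ssets X D"
proof
  fix Y assume "Y \<in> shsets X D"
  then have "Y \<subseteq> X \<and> shatters D Y" unfolding shsets_def by simp
  then have "\<exists>T. T \<subseteq> X - Y \<and> cube Y T \<subseteq> D" using assms unfolding ample_def by (elim allE[of _ Y]) blast
  then obtain T where "T \<subseteq> X - Y" "cube Y T \<subseteq> D" by blast
  then show "Y \<in> ssets X D" using \<open>Y \<subseteq> X \<and> shatters D Y\<close> by (intro ssetsI) auto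
qed

lemma ample_ss_card:
  assumes "finite X" "D \<subseteq> Pow X" "ample X D"
  shows "card (ssets X D) = card D"
proof -
  have "card D \<le> card (shsets X D)" by (rule pajor[OF assms(1,2)])
  also have "\<dots> \<le> card (ssets X D)" by (rule card_mono[OF finite_ssets[OF assms(1)] ample_shsets_sub[OF assms(3)]])
  finally show ?thesis using ss_le[OF assms(1,2)] by linarith
qed

lemma ss_half_split:
  "ssets X D \<subseteq> ssets X (half x True D) \<union> ssets X (half x False D) \<union>
     insert x ` (ssets X (half x True D) \<inter> ssets X (half x False D))"
proof
  fix Y assume "Y \<in> ssets X D"
  then obtain T where Y: "Y \<subseteq> X" and T: "T \<subseteq> X - Y" and cub: "cube Y T \<subseteq> D"
    by (rule ssetsE)
  show "Y \<in> ssets X (half x True D) \<union> ssets X (half x False D) \<union>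
     insert x ` (ssets X (half x True D) \<inter> ssets X (half x False D))"
  proof (cases "x \<in> Y")
    case False
    show ?thesis
    proof (cases "x \<in> T")
      case True
      have "cube Y T \<subseteq> half x True D"
      proof
        fix e assume "e \<in> cube Y T"
        then have "e \<in> D" using cub by blast
        moreover have "x \<in> e" using \<open>e \<in> cube Y T\<close> True unfolding mem_cube by blast
        ultimately
        show "e \<in> half x True D" unfolding half_def by simp
      qed
      then have "Y \<in> ssets X (half x True D)" using Y T by (intro ssetsI)
      then show ?thesis by simp
    next
      case xT: False
      have "cube Y T \<subseteq> half x False D"
      proof
        fix e assume e: "e \<in> cube Y T"
        then have "e \<in> D" using cub by blast
        moreover have "x \<notin> e" using e xT False unfolding mem_cube by blast
        ultimately show "e \<in> half x False D" unfolding half_def by simp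
      qed
      then have "Y \<in> ssets X (half x False D)" using Y T by (intro ssetsI)
      then show ?thesis by simp
    qed
  next
    case True
    have xT: "x \<notin> T" using T True by blast
    have c1: "cube (Y - {x}) T \<subseteq> half x False D"
    proof
      fix e assume e: "e \<in> cube (Y - {x}) T"
      then have "e \<in> cube Y T" unfolding mem_cube by blast
      then have "e \<in> D" using cub by blast
      moreover have "x \<notin> e" using e xT unfolding mem_cube by blast
      ultimately show "e \<in> half x False D" unfolding half_def by simp
    qed
    have c2: "cube (Y - {x}) (insert x T) \<subseteq> half x True D"
    proof
      fix e assume e: "e \<in> cube (Y - {x}) (insert x T)"
      then have "e \<in> cube Y T" using True unfolding mem_cube by blast
      then have "e \<in> D" using cub by blast
      moreover have "x \<in> e" using e unfolding mem_cube by blast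
      ultimately show "e \<in> half x True D" unfolding half_def by simp
    qed
    have "Y - {x} \<subseteq> X" "T \<subseteq> X - (Y - {x})" "insert x T \<subseteq> X - (Y - {x})"
      using Y T True by blast+
    then have "Y - {x} \<in> ssets X (half x True D) \<inter> ssets X (half x False D)"
      using c1 c2 by (intro IntI ssetsI)
    then have "insert x (Y - {x}) \<in> insert x ` (ssets X (half x True D) \<inter> ssets X (half x False D))"
      by (rule imageI)
    moreover have "Y = insert x (Y - {x})" using True by blast
    ultimately show ?thesis by (metis UnI2)
  qed
qed

lemma card_half: "finite D \<Longrightarrow> card D = card (half x True D) + card (half x False D)"
proof -
  assume f: "finite D"
  have "D = half x True D \<union> half x False D" unfolding half_def by blast
  moreover have "half x True D \<inter> half x False D = {}" unfolding half_def by blast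
  ultimately show ?thesis using f card_Un_disjoint[of "half x True D" "half x False D"]
    by (metis finite_Un)
qed

lemma half_Pow: "D \<subseteq> Pow X \<Longrightarrow> half x s D \<subseteq> Pow X"
  unfolding half_def by blast

lemma ample_half:
  assumes "finite X" "D \<subseteq> Pow X" "ample X D"
  shows "ample X (half x s D)"
proof -
  define A where "A = ssets X (half x True D)"
  define B where "B = ssets X (half x False D)"
  have fD: "finite D" using assms(1,2) by (meson finite_Pow_iff finite_subset)
  have fA: "finite A" "finite B" unfolding A_def B_def using finite_ssets[OF assms(1)] by auto
  have "card (ssets X D) \<le> card (A \<union> B \<union> insert x ` (A \<inter> B))"
  proof (rule card_mono)
    show "finite (A \<union> B \<union> insert x ` (A \<inter> B))" using fA by simp
    show "ssets X D \<subseteq> A \<union> B \<union> insert x ` (A \<inter> B)" unfolding A_def B_def by (rule ss_half_split)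
  qed
  also have "\<dots> \<le> card (A \<union> B) + card (insert x ` (A \<inter> B))" by (rule card_Un_le)
  also have "\<dots> \<le> card (A \<union> B) + card (A \<inter> B)" using card_image_le[of "A \<inter> B" "insert x"] fA by simp
  also have "\<dots> = card A + card B" using card_Un_Int[OF fA] by simp
  finally have le: "card (ssets X D) \<le> card A + card B" .
  have eq: "card (ssets X D) = card D" by (rule ample_ss_card[OF assms])
  have hT: "half x True D \<subseteq> Pow X" "half x False D \<subseteq> Pow X" using half_Pow[OF assms(2)] by auto
  have lA: "card A \<le> card (half x True D)" unfolding A_def by (rule ss_le[OF assms(1) hT(1)])
  have lB: "card B \<le> card (half x False D)" unfolding B_def by (rule ss_le[OF assms(1) hT(2)])
  have cD: "card D = card (half x True D) + card (half x False D)" by (rule card_half[OF fD])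
  have eA: "card A = card (half x True D)" using le eq lA lB cD by linarith
  have eB: "card B = card (half x False D)" using le eq lA lB cD by linarith
  show ?thesis
  proof (cases s)
    case True
    then show ?thesis using ss_eq_ample[OF assms(1) hT(1)] eA unfolding A_def by simp
  next
    case False
    then show ?thesis using ss_eq_ample[OF assms(1) hT(2)] eB unfolding B_def by simp
  qed
qed

lemma cornerE:
  assumes "corner X D c"
  obtains S U where "c \<in> D" "U \<subseteq> X - S" "c \<in> cube S U" "cube S U \<subseteq> D"
    "\<And>Y T. T \<subseteq> X - Y \<Longrightarrow> cube Y T \<subseteq> D \<Longrightarrow> c \<in> cube Y T \<Longrightarrow> cube Y T \<subseteq> cube S U"
proof -
  have "c \<in> D" and ex: "\<exists>S U. U \<subseteq> X - S \<and> c \<in> cube S U \<and> cube S U \<subseteq> D \<and>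
     (\<forall>Y T. T \<subseteq> X - Y \<and> cube Y T \<subseteq> D \<and> c \<in> cube Y T \<longrightarrow> cube Y T \<subseteq> cube S U)"
    using assms unfolding corner_def by simp_all
  from ex obtain S U where h: "U \<subseteq> X - S \<and> c \<in> cube S U \<and> cube S U \<subseteq> D \<and>
     (\<forall>Y T. T \<subseteq> X - Y \<and> cube Y T \<subseteq> D \<and> c \<in> cube Y T \<longrightarrow> cube Y T \<subseteq> cube S U)"
    by (elim exE)
  show ?thesis
  proof (rule that[of U S])
    show "c \<in> D" by fact
    show "U \<subseteq> X - S" "c \<in> cube S U" "cube S U \<subseteq> D" using h by simp_all
    fix Y T assume "T \<subseteq> X - Y" "cube Y T \<subseteq> D" "c \<in> cube Y T"
    then show "cube Y T \<subseteq> cube S U" using h by simp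
  qed
qed

lemma cornerI:
  assumes "c \<in> D" "U \<subseteq> X - S" "c \<in> cube S U" "cube S U \<subseteq> D"
    "\<And>Y T. T \<subseteq> X - Y \<Longrightarrow> cube Y T \<subseteq> D \<Longrightarrow> c \<in> cube Y T \<Longrightarrow> cube Y T \<subseteq> cube S U"
  shows "corner X D c"
proof -
  have "\<forall>Y T. T \<subseteq> X - Y \<and> cube Y T \<subseteq> D \<and> c \<in> cube Y T \<longrightarrow> cube Y T \<subseteq> cube S U"
    using assms(5) by blast
  then have "U \<subseteq> X - S \<and> c \<in> cube S U \<and> cube S U \<subseteq> D \<and>
     (\<forall>Y T. T \<subseteq> X - Y \<and> cube Y T \<subseteq> D \<and> c \<in> cube Y T \<longrightarrow> cube Y T \<subseteq> cube S U)"
    using assms(2-4) by simp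
  then show ?thesis unfolding corner_def using assms(1) by (intro conjI exI[of _ S] exI[of _ U]) simp_all
qed

lemma corner_remove:
  assumes "finite X" "D \<subseteq> Pow X" "ample X D" "corner X D c"
  shows "ample X (D - {c})"
proof -
  obtain U S where cD: "c \<in> D" and U: "U \<subseteq> X - S" and cS: "c \<in> cube S U" and SD: "cube S U \<subseteq> D"
    and mx: "\<And>Y T. T \<subseteq> X - Y \<Longrightarrow> cube Y T \<subseteq> D \<Longrightarrow> c \<in> cube Y T \<Longrightarrow> cube Y T \<subseteq> cube S U"
    using assms(4) by (elim cornerE) blast
  have "U \<union> S \<in> cube S U" unfolding mem_cube by blast
  then have SX: "S \<subseteq> X" using SD assms(2) by blast
  have Sin: "S \<in> ssets X D" using SX U SD by (intro ssetsI)
  have sub: "ssets X D - {S} \<subseteq> ssets X (D - {c})"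
  proof
    fix Y assume Yin: "Y \<in> ssets X D - {S}"
    then have YS: "Y \<noteq> S" by blast
    from Yin obtain T where Y: "Y \<subseteq> X" and T: "T \<subseteq> X - Y" and cub: "cube Y T \<subseteq> D"
      by (elim DiffE ssetsE)
    show "Y \<in> ssets X (D - {c})"
    proof (cases "c \<in> cube Y T")
      case False
      then have "cube Y T \<subseteq> D - {c}" using cub by blast
      then show ?thesis using Y T by (intro ssetsI)
    next
      case True
      have "cube Y T \<subseteq> cube S U" by (rule mx[OF T cub True])
      then have UT: "U \<subseteq> T" and TY: "T \<union> Y \<subseteq> U \<union> S" unfolding cube_subset_cube by auto
      have "Y \<subseteq> S" using UT TY T by blast
      then obtain s where s: "s \<in> S" "s \<notin> Y" using YS by blast
      define T' where "T' = flip s T"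
      have T'1: "T' \<subseteq> X - Y" unfolding T'_def flip_def using T s SX by auto
      have "s \<notin> U" using U s by blast
      then have "U \<subseteq> T'" unfolding T'_def flip_def using UT by auto
      moreover have "T' \<union> Y \<subseteq> U \<union> S" unfolding T'_def flip_def using TY s by auto
      ultimately have "cube Y T' \<subseteq> cube S U" unfolding cube_subset_cube by blast
      then have c1: "cube Y T' \<subseteq> D" using SD by blast
      have csT: "s \<in> c \<longleftrightarrow> s \<in> T" using True s(2) unfolding mem_cube by blast
      have "c \<notin> cube Y T'"
      proof
        assume "c \<in> cube Y T'"
        then have "s \<in> c \<longleftrightarrow> s \<in> T'" using s(2) unfolding mem_cube by blast
        then show False using csT unfolding T'_def flip_def by auto
      qed
      then have "cube Y T' \<subseteq> D - {c}" using c1 by blast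
      then show ?thesis using Y T'1 by (intro ssetsI)
    qed
  qed
  have fD: "finite D" using assms(1,2) by (meson finite_Pow_iff finite_subset)
  have D'P: "D - {c} \<subseteq> Pow X" using assms(2) by blast
  have "card (ssets X D) - 1 = card (ssets X D - {S})" using Sin finite_ssets[OF assms(1)] by simp
  also have "\<dots> \<le> card (ssets X (D - {c}))" by (rule card_mono[OF finite_ssets[OF assms(1)] sub])
  finally have "card (D - {c}) \<le> card (ssets X (D - {c}))"
    using ample_ss_card[OF assms(1,2,3)] cD fD by simp
  then have "card (ssets X (D - {c})) = card (D - {c})" using ss_le[OF assms(1) D'P] by linarith
  then show ?thesis by (rule ss_eq_ample[OF assms(1) D'P])
qed



lemma half_sub: "half x s D \<subseteq> D" unfolding half_def by blast
lemma bd_sub: "bd x s D \<subseteq> half x s D" unfolding bd_def half_def by blast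

lemma shatters_bd_ins:
  assumes "shatters (bd x s D) Y"
  shows "x \<notin> Y" "shatters D (insert x Y)"
proof -
  show xY: "x \<notin> Y"
  proof
    assume xY: "x \<in> Y"
    have "(if s then {} else Y) \<subseteq> Y" by simp
    then obtain c where c: "c \<in> bd x s D" "c \<inter> Y = (if s then {} else Y)"
      using assms unfolding shatters_iff by blast
    have "(x \<in> c) = s" using c(1) unfolding bd_def by blast
    then show False using c(2) xY by (cases s) auto
  qed
  show "shatters D (insert x Y)" unfolding shatters_iff
  proof (intro allI impI)
    fix Z assume Z: "Z \<subseteq> insert x Y"
    have "Z - {x} \<subseteq> Y" using Z by blast
    then obtain c where c: "c \<in> bd x s D" "c \<inter> Y = Z - {x}" using assms unfolding shatters_iff by blast
    then have cD: "c \<in> D" "flip x c \<in> D" "(x \<in> c) = s" unfolding bd_def by auto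
    show "\<exists>c\<in>D. c \<inter> insert x Y = Z"
    proof (cases "(x \<in> Z) = s")
      case True
      have "c \<inter> insert x Y = Z" using c(2) cD(3) True xY by auto
      then show ?thesis using cD(1) by blast
    next
      case False
      have "flip x c \<inter> insert x Y = Z" using c(2) cD(3) False xY unfolding flip_def by auto
      then show ?thesis using cD(2) by blast
    qed
  qed
qed

lemma ample_bd:
  assumes "finite X" "D \<subseteq> Pow X" "ample X D"
  shows "ample X (bd x s D)"
  unfolding ample_def
proof (intro allI impI)
  fix Y assume "Y \<subseteq> X \<and> shatters (bd x s D) Y"
  then have Y: "Y \<subseteq> X" and sh: "shatters (bd x s D) Y" by auto
  have xY: "x \<notin> Y" and sh2: "shatters D (insert x Y)" using shatters_bd_ins[OF sh] by auto
  have "insert x Y \<subseteq> X" using shatters_subset_X[OF sh2 assms(2)] .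
  then have "insert x Y \<subseteq> X \<and> shatters D (insert x Y)" using sh2 by simp
  then obtain T where T: "T \<subseteq> X - insert x Y" and cub: "cube (insert x Y) T \<subseteq> D"
    using assms(3) unfolding ample_def by (elim allE[of _ "insert x Y"]) blast
  have xX: "x \<in> X" using \<open>insert x Y \<subseteq> X\<close> by simp
  define T' where "T' = (if s then insert x T else T)"
  have T'X: "T' \<subseteq> X - Y" unfolding T'_def using T xX xY by auto
  have "cube Y T' \<subseteq> bd x s D"
  proof
    fix e assume e: "e \<in> cube Y T'"
    have e1: "T' \<subseteq> e" "e \<subseteq> T' \<union> Y" using e unfolding mem_cube by auto
    have "e \<in> cube (insert x Y) T" unfolding mem_cube using e1 T unfolding T'_def by (auto split: if_splits)
    then have "e \<in> D" using cub by blast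
    have "flip x e \<in> cube (insert x Y) T" unfolding mem_cube flip_def using e1 T unfolding T'_def
      by (auto split: if_splits)
    then have "flip x e \<in> D" using cub by blast
    have "(x \<in> e) = s" using e1 T xY unfolding T'_def by (auto split: if_splits)
    then show "e \<in> bd x s D" unfolding bd_def using \<open>e \<in> D\<close> \<open>flip x e \<in> D\<close> by simp
  qed
  then show "\<exists>T. T \<subseteq> X - Y \<and> cube Y T \<subseteq> bd x s D" using T'X by blast
qed

lemma VC_bd:
  assumes "finite X" "D \<subseteq> Pow X" "VCle X 2 D"
  shows "VCle X 1 (bd x s D)"
  unfolding VCle_def
proof (intro allI impI)
  fix Y assume "Y \<subseteq> X \<and> shatters (bd x s D) Y"
  then have Y: "Y \<subseteq> X" and sh: "shatters (bd x s D) Y" by auto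
  have xY: "x \<notin> Y" and sh2: "shatters D (insert x Y)" using shatters_bd_ins[OF sh] by auto
  have "insert x Y \<subseteq> X" using shatters_subset_X[OF sh2 assms(2)] .
  then have "card (insert x Y) \<le> 2" using assms(3) sh2 unfolding VCle_def by blast
  moreover have "finite Y" using Y assms(1) by (rule finite_subset)
  ultimately show "card Y \<le> 1" using xY by simp
qed

lemma corner_CT1:
  assumes "corner X (half x s D) h" "flip x h \<notin> D"
  shows "corner X D h"
proof -
  obtain U S where hH: "h \<in> half x s D" and U: "U \<subseteq> X - S" and hS: "h \<in> cube S U"
    and SH: "cube S U \<subseteq> half x s D"
    and mx: "\<And>Y T. T \<subseteq> X - Y \<Longrightarrow> cube Y T \<subseteq> half x s D \<Longrightarrow> h \<in> cube Y T \<Longrightarrow> cube Y T \<subseteq> cube S U"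
    using assms(1) by (elim cornerE) blast
  have hx: "(x \<in> h) = s" using hH unfolding half_def by simp
  show ?thesis
  proof (rule cornerI[OF _ U hS])
    show "h \<in> D" using hH half_sub[of x s D] by blast
    show "cube S U \<subseteq> D" using SH half_sub[of x s D] by blast
    fix Y T assume T: "T \<subseteq> X - Y" and cub: "cube Y T \<subseteq> D" and hY: "h \<in> cube Y T"
    have hT: "T \<subseteq> h" "h \<subseteq> T \<union> Y" using hY unfolding mem_cube by auto
    have xY: "x \<notin> Y"
    proof
      assume xY: "x \<in> Y"
      have "x \<notin> T" using T xY by blast
      then have "T \<subseteq> flip x h" "flip x h \<subseteq> T \<union> Y" unfolding flip_def using hT xY by auto
      then have "flip x h \<in> cube Y T" unfolding mem_cube by simp
      then have "flip x h \<in> D" using cub by blast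
      then show False using assms(2) by simp
    qed
    have "cube Y T \<subseteq> half x s D"
    proof
      fix e assume e: "e \<in> cube Y T"
      then have "e \<in> D" using cub by blast
      moreover have "T \<subseteq> e" "e \<subseteq> T \<union> Y" using e unfolding mem_cube by auto
      then have "(x \<in> e) = (x \<in> T)" using xY by auto
      moreover have "(x \<in> h) = (x \<in> T)" using hT xY by auto
      ultimately have "e \<in> D" "(x \<in> e) = (x \<in> h)" by simp_all
      then show "e \<in> half x s D" unfolding half_def using hx by simp
    qed
    then show "cube Y T \<subseteq> cube S U" by (rule mx[OF T _ hY])
  qed
qed

lemma corner_CT2:
  assumes "D \<subseteq> Pow X" "corner X (half x s D) h" "\<And>d. d \<in> half x s D \<Longrightarrow> flip x d \<in> D"
  shows "corner X D h"
proof -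
  obtain U S where hH: "h \<in> half x s D" and U: "U \<subseteq> X - S" and hS: "h \<in> cube S U"
    and SH: "cube S U \<subseteq> half x s D"
    and mx: "\<And>Y T. T \<subseteq> X - Y \<Longrightarrow> cube Y T \<subseteq> half x s D \<Longrightarrow> h \<in> cube Y T \<Longrightarrow> cube Y T \<subseteq> cube S U"
    using assms(2) by (elim cornerE) blast
  have hx: "(x \<in> h) = s" using hH unfolding half_def by simp
  have hD: "h \<in> D" using hH half_sub[of x s D] by blast
  have hX: "h \<subseteq> X" using hD assms(1) by blast
  have hSU: "U \<subseteq> h" "h \<subseteq> U \<union> S" using hS unfolding mem_cube by auto
  show ?thesis
  proof (rule cornerI[of h D "U - {x}" X "insert x S"])
    show "h \<in> D" by fact
    show "U - {x} \<subseteq> X - insert x S" using U by blast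
    show "h \<in> cube (insert x S) (U - {x})" unfolding mem_cube using hSU by blast
    show "cube (insert x S) (U - {x}) \<subseteq> D"
    proof
      fix e assume e: "e \<in> cube (insert x S) (U - {x})"
      have e1: "U - {x} \<subseteq> e" "e \<subseteq> (U - {x}) \<union> insert x S" using e unfolding mem_cube by auto
      define e0 where "e0 = (if s then insert x e else e - {x})"
      have "e0 \<in> cube S U" unfolding mem_cube e0_def using e1 hSU hx by (auto split: if_splits)
      then have e0H: "e0 \<in> half x s D" using SH by blast
      then have "e0 \<in> D" "flip x e0 \<in> D" using assms(3)[OF e0H] half_sub[of x s D] by blast+
      moreover have "e = e0 \<or> e = flip x e0" unfolding e0_def flip_def by (cases s; cases "x \<in> e") auto
      ultimately show "e \<in> D" by blast
    qed
    fix Y T assume T: "T \<subseteq> X - Y" and cub: "cube Y T \<subseteq> D" and hY: "h \<in> cube Y T"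
    have hT: "T \<subseteq> h" "h \<subseteq> T \<union> Y" using hY unfolding mem_cube by auto
    define Y0 where "Y0 = Y - {x}"
    define T0 where "T0 = (if s then insert x T else T - {x})"
    have T0X: "T0 \<subseteq> X - Y0" unfolding T0_def Y0_def using T hX hx by (auto split: if_splits)
    have sub: "cube Y0 T0 \<subseteq> half x s D"
    proof
      fix e assume e: "e \<in> cube Y0 T0"
      have e1: "T0 \<subseteq> e" "e \<subseteq> T0 \<union> Y0" using e unfolding mem_cube by auto
      have "e \<in> cube Y T" unfolding mem_cube using e1 hT hx unfolding T0_def Y0_def
        by (auto split: if_splits)
      then have "e \<in> D" using cub by blast
      moreover have "(x \<in> e) = s" using e1 unfolding T0_def Y0_def by (auto split: if_splits)
      ultimately show "e \<in> half x s D" unfolding half_def by simp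
    qed
    have hY0: "h \<in> cube Y0 T0" unfolding mem_cube T0_def Y0_def using hT hx by (auto split: if_splits)
    have "cube Y0 T0 \<subseteq> cube S U" by (rule mx[OF T0X sub hY0])
    then have "U \<subseteq> T0" "T0 \<union> Y0 \<subseteq> U \<union> S" unfolding cube_subset_cube by auto
    then have "U - {x} \<subseteq> T" "T \<union> Y \<subseteq> (U - {x}) \<union> insert x S"
      unfolding T0_def Y0_def by (auto split: if_splits)
    then show "cube Y T \<subseteq> cube (insert x S) (U - {x})" unfolding cube_subset_cube by blast
  qed
qed



lemma tree_leaf:
  assumes fX: "finite X" and FP: "F \<subseteq> Pow X" and amp: "ample X F" and vc: "VCle X 1 F"
    and two: "\<not> (\<exists>f. F \<subseteq> {f})"
  shows "\<exists>f x. f \<in> F \<and> flip x f \<in> F \<and> half x (x \<in> f) F = {f}"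
proof -
  define Opt where "Opt = {(x, s). x \<in> X \<and> half x s F \<noteq> {} \<and> half x s F \<noteq> F}"
  obtain a b where ab: "a \<in> F" "b \<in> F" "a \<noteq> b" using two by blast
  then obtain x0 where x0: "x0 \<in> (a - b) \<union> (b - a)" by blast
  have x0X: "x0 \<in> X" using x0 ab FP by blast
  have "(x0 \<in> b) \<noteq> (x0 \<in> a)" using x0 by blast
  then have "a \<in> half x0 (x0 \<in> a) F" "b \<notin> half x0 (x0 \<in> a) F" using ab unfolding half_def by simp_all
  then have "half x0 (x0 \<in> a) F \<noteq> {}" "half x0 (x0 \<in> a) F \<noteq> F" using ab by blast+
  then have "(x0, x0 \<in> a) \<in> Opt" unfolding Opt_def using x0X by simp
  then obtain p where p: "p \<in> Opt"
    and pmin: "\<And>q. q \<in> Opt \<Longrightarrow> card (half (fst p) (snd p) F) \<le> card (half (fst q) (snd q) F)"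
    using ex_has_least_nat[of "\<lambda>q. q \<in> Opt" "(x0, x0 \<in> a)" "\<lambda>q. card (half (fst q) (snd q) F)"]
    by blast
  obtain x s where xs: "p = (x, s)" by (cases p)
  define S where "S = half x s F"
  have xX: "x \<in> X" and Sne: "S \<noteq> {}" and SF: "S \<noteq> F" using p unfolding xs Opt_def S_def by auto
  have Smin: "\<And>z t. (z, t) \<in> Opt \<Longrightarrow> card S \<le> card (half z t F)"
    using pmin unfolding xs S_def by fastforce
  have fF: "finite F" using fX FP by (meson finite_Pow_iff finite_subset)
  have SsubF: "S \<subseteq> F" unfolding S_def by (rule half_sub)
  obtain a1 where a1: "a1 \<in> S" using Sne by blast
  obtain b1 where b1: "b1 \<in> F" "b1 \<notin> S" using SF SsubF by blast
  have a1x: "(x \<in> a1) = s" using a1 unfolding S_def half_def by simp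
  have b1x: "(x \<in> b1) \<noteq> s" using b1 unfolding S_def half_def by simp
  have "shatters F {x}"
  proof (cases s)
    case True
    then show ?thesis using shatters_single[of a1 F b1 x] a1 SsubF b1 a1x b1x by blast
  next
    case False
    then show ?thesis using shatters_single[of b1 F a1 x] a1 SsubF b1 a1x b1x by blast
  qed
  then obtain p0 where p0: "x \<notin> p0" "p0 \<in> F" "insert x p0 \<in> F" using ample_edge[OF amp xX] by blast
  define q where "q = (if s then insert x p0 else p0)"
  have qS: "q \<in> S" unfolding q_def S_def half_def using p0 by auto
  have qx: "(x \<in> q) = s" unfolding q_def using p0 by auto
  have fq: "flip x q \<in> F" unfolding q_def flip_def using p0 by auto
  have fqx: "(x \<in> flip x q) \<noteq> s" using qx unfolding flip_def by auto
  have Sq: "S = {q}"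
  proof (rule ccontr)
    assume "S \<noteq> {q}"
    then obtain a' where a': "a' \<in> S" "a' \<noteq> q" using qS by blast
    then obtain z where z: "z \<in> (a' - q) \<union> (q - a')" by blast
    have zX: "z \<in> X" using z a' qS SsubF FP by blast
    have "shatters S {z}"
    proof (cases "z \<in> a'")
      case True
      then have "z \<notin> q" using z by blast
      then show ?thesis using shatters_single[of a' S q z] a' qS True by blast
    next
      case False
      then have "z \<in> q" using z by blast
      then show ?thesis using shatters_single[of q S a' z] a' qS False by blast
    qed
    moreover have ampS: "ample X S" unfolding S_def by (rule ample_half[OF fX FP amp])
    ultimately obtain T where T: "z \<notin> T" "T \<in> S" "insert z T \<in> S" using ample_edge[OF ampS zX] by blast
    have Tx: "(x \<in> T) = s" "(x \<in> insert z T) = s" using T unfolding S_def half_def by auto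
    have zx: "z \<noteq> x" using Tx T(1) by auto
    define G where "G = half z (z \<notin> q) F"
    have GF: "G \<noteq> F" using qS SsubF unfolding G_def half_def by auto
    have Gne: "G \<noteq> {}"
    proof (cases "z \<in> q")
      case True
      then have "T \<in> G" using T SsubF unfolding G_def half_def by auto
      then show ?thesis by blast
    next
      case False
      then have "insert z T \<in> G" using T SsubF unfolding G_def half_def by auto
      then show ?thesis by blast
    qed
    have GS: "G \<subseteq> S"
    proof
      fix g assume gG: "g \<in> G"
      show "g \<in> S"
      proof (rule ccontr)
        assume gS: "g \<notin> S"
        have gF: "g \<in> F" and gz: "(z \<in> g) = (z \<notin> q)" using gG unfolding G_def half_def by auto
        have gx: "(x \<in> g) \<noteq> s" using gS gF unfolding S_def half_def by auto
        have "shatters F {x, z}"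
        proof (rule shatters_pair)
          show "x \<noteq> z" using zx by simp
          fix bx bz
          show "\<exists>c\<in>F. (x \<in> c) = bx \<and> (z \<in> c) = bz"
          proof (cases "bx = s")
            case True
            show ?thesis
            proof (cases bz)
              case True
              then show ?thesis using T Tx SsubF \<open>bx = s\<close> by (intro bexI[of _ "insert z T"]) auto
            next
              case False
              then show ?thesis using T Tx SsubF \<open>bx = s\<close> by (intro bexI[of _ T]) auto
            qed
          next
            case False
            then have bx: "bx = (\<not> s)" by auto
            show ?thesis
            proof (cases "bz = (z \<notin> q)")
              case True
              then show ?thesis using gF gz gx bx by (intro bexI[of _ g]) auto
            next
              case False
              have "(z \<in> flip x q) = (z \<in> q)" using zx by (rule flip_other)
              then show ?thesis using fq fqx False bx by (intro bexI[of _ "flip x q"]) auto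
            qed
          qed
        qed
        moreover have "{x, z} \<subseteq> X" using xX zX by blast
        ultimately have "card {x, z} \<le> 1" using vc unfolding VCle_def by blast
        then show False using zx by simp
      qed
    qed
    have "q \<notin> G" unfolding G_def half_def by simp
    then have "G \<subset> S" using GS qS by blast
    moreover have "finite S" using finite_subset[OF SsubF fF] .
    ultimately have "card G < card S" by (rule psubset_card_mono[rotated])
    moreover have "(z, z \<notin> q) \<in> Opt" unfolding Opt_def using zX Gne GF unfolding G_def by blast
    then have "card S \<le> card G" unfolding G_def by (rule Smin)
    ultimately show False by simp
  qed
  have "half x (x \<in> q) F = {q}" using Sq qx unfolding S_def by simp
  moreover have "q \<in> F" using qS SsubF by blast
  ultimately show ?thesis using fq by blast
qed



lemma flip_neq: "flip x d \<noteq> d" unfolding flip_def by auto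

lemma ample_single:
  assumes "f \<subseteq> X" shows "ample X {f}"
  unfolding ample_def
proof (intro allI impI)
  fix Y assume "Y \<subseteq> X \<and> shatters {f} Y"
  then have sh: "shatters {f} Y" by simp
  have "Y = {}"
  proof -
    obtain c1 where "c1 \<in> {f}" "c1 \<inter> Y = {}" using sh unfolding shatters_iff by blast
    moreover obtain c2 where "c2 \<in> {f}" "c2 \<inter> Y = Y" using sh unfolding shatters_iff by blast
    ultimately show "Y = {}" by blast
  qed
  moreover have "cube {} f \<subseteq> {f}" unfolding cube_eq by blast
  ultimately show "\<exists>T. T \<subseteq> X - Y \<and> cube Y T \<subseteq> {f}" using assms by blast
qed

lemma VC_single: "VCle X 1 {f}"
  unfolding VCle_def
proof (intro allI impI)
  fix Y assume "Y \<subseteq> X \<and> shatters {f} Y"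
  then have sh: "shatters {f} Y" by simp
  obtain c1 where "c1 \<in> {f}" "c1 \<inter> Y = {}" using sh unfolding shatters_iff by blast
  moreover obtain c2 where "c2 \<in> {f}" "c2 \<inter> Y = Y" using sh unfolding shatters_iff by blast
  ultimately have "Y = {}" by blast
  then show "card Y \<le> 1" by simp
qed

lemma VC_empty: "VCle X k {}"
  unfolding VCle_def using shatters_empty_class by blast

lemma corner_single:
  assumes "c \<subseteq> X" shows "corner X {c} c"
proof (rule cornerI[of c "{c}" c X "{}"])
  show "c \<in> {c}" by simp
  show "c \<subseteq> X - {}" using assms by simp
  show "c \<in> cube {} c" unfolding mem_cube by simp
  show "cube {} c \<subseteq> {c}" unfolding cube_eq by blast
  fix Y T assume "cube Y T \<subseteq> {c}"
  moreover have "{c} \<subseteq> cube {} c" unfolding cube_eq by blast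
  ultimately show "cube Y T \<subseteq> cube {} c" by blast
qed

lemma cube_edge: "e \<in> cube {x} (f - {x}) \<Longrightarrow> e = f \<or> e = flip x f"
proof -
  assume "e \<in> cube {x} (f - {x})"
  then have e: "f - {x} \<subseteq> e" "e \<subseteq> (f - {x}) \<union> {x}" unfolding mem_cube by auto
  then have "e - {x} = f - {x}" by blast
  then have eq: "\<And>y. y \<noteq> x \<Longrightarrow> (y \<in> e) = (y \<in> f)" by blast
  show ?thesis
  proof (cases "(x \<in> e) = (x \<in> f)")
    case True
    have "e = f"
    proof (rule set_eqI)
      fix y show "(y \<in> e) = (y \<in> f)" using True eq[of y] by (cases "y = x") auto
    qed
    then show ?thesis by simp
  next
    case False
    have "e = flip x f"
    proof (rule set_eqI)
      fix y show "(y \<in> e) = (y \<in> flip x f)" using False eq[of y] flip_in[of x f] flip_other[of y x f]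
        by (cases "y = x") auto
    qed
    then show ?thesis by simp
  qed
qed

lemma leaf_corner_cubes:
  assumes H: "half x s D = {f}" and T: "T \<subseteq> X - Y" and cub: "cube Y T \<subseteq> D" and fY: "f \<in> cube Y T"
  shows "cube Y T \<subseteq> cube {x} (f - {x})"
proof -
  have fT: "T \<subseteq> f" "f \<subseteq> T \<union> Y" using fY unfolding mem_cube by auto
  have fx: "(x \<in> f) = s" using H unfolding half_def by blast
  have Yx: "Y \<subseteq> {x}"
  proof
    fix y assume yY: "y \<in> Y"
    show "y \<in> {x}"
    proof (rule ccontr)
      assume "y \<notin> {x}"
      then have yx: "y \<noteq> x" by simp
      have "y \<notin> T" using T yY by blast
      then have "T \<subseteq> flip y f" "flip y f \<subseteq> T \<union> Y" unfolding flip_def using fT yY by auto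
      then have "flip y f \<in> cube Y T" unfolding mem_cube by simp
      then have "flip y f \<in> D" using cub by blast
      moreover have "(x \<in> flip y f) = s" using fx flip_other[of x y f] yx by simp
      ultimately have "flip y f \<in> half x s D" unfolding half_def by simp
      then have "flip y f = f" using H by simp
      then show False using flip_neq by metis
    qed
  qed
  have "f - {x} \<subseteq> T" using fT Yx by blast
  moreover have "T \<union> Y \<subseteq> (f - {x}) \<union> {x}" using fT Yx by blast
  ultimately show ?thesis unfolding cube_subset_cube by blast
qed

lemma leaf_corner:
  assumes DP: "D \<subseteq> Pow X" and H: "half x s D = {f}" and ff: "flip x f \<in> D"
  shows "corner X D f"
proof -
  have fD: "f \<in> D" using H half_sub[of x s D] by blast
  have fX: "f \<subseteq> X" using fD DP by blast
  show ?thesis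
  proof (rule cornerI[of f D "f - {x}" X "{x}"])
    show "f \<in> D" by fact
    show "f - {x} \<subseteq> X - {x}" using fX by blast
    show "f \<in> cube {x} (f - {x})" unfolding mem_cube by blast
    show "cube {x} (f - {x}) \<subseteq> D"
    proof
      fix e assume "e \<in> cube {x} (f - {x})"
      then have "e = f \<or> e = flip x f" by (rule cube_edge)
      then show "e \<in> D" using fD ff by auto
    qed
    fix Y T assume "T \<subseteq> X - Y" "cube Y T \<subseteq> D" "f \<in> cube Y T"
    then show "cube Y T \<subseteq> cube {x} (f - {x})" by (rule leaf_corner_cubes[OF H])
  qed
qed

lemma corner_lift:
  assumes cc: "corner X (D - {f}) c" and cf: "c \<noteq> f" "c \<noteq> flip x f"
    and fc: "\<And>Y T. T \<subseteq> X - Y \<Longrightarrow> cube Y T \<subseteq> D \<Longrightarrow> f \<in> cube Y T \<Longrightarrow> cube Y T \<subseteq> cube {x} (f - {x})"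
  shows "corner X D c"
proof -
  obtain U S where cD: "c \<in> D - {f}" and U: "U \<subseteq> X - S" and cS: "c \<in> cube S U"
    and SD: "cube S U \<subseteq> D - {f}"
    and mx: "\<And>Y T. T \<subseteq> X - Y \<Longrightarrow> cube Y T \<subseteq> D - {f} \<Longrightarrow> c \<in> cube Y T \<Longrightarrow> cube Y T \<subseteq> cube S U"
    using cc by (elim cornerE) blast
  show ?thesis
  proof (rule cornerI[OF _ U cS])
    show "c \<in> D" using cD by blast
    show "cube S U \<subseteq> D" using SD by blast
    fix Y T assume T: "T \<subseteq> X - Y" and cub: "cube Y T \<subseteq> D" and cY: "c \<in> cube Y T"
    have "f \<notin> cube Y T"
    proof
      assume "f \<in> cube Y T"
      then have "cube Y T \<subseteq> cube {x} (f - {x})" by (rule fc[OF T cub])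
      then have "c \<in> cube {x} (f - {x})" using cY by blast
      then have "c = f \<or> c = flip x f" by (rule cube_edge)
      then show False using cf by simp
    qed
    then have "cube Y T \<subseteq> D - {f}" using cub by blast
    then show "cube Y T \<subseteq> cube S U" by (rule mx[OF T _ cY])
  qed
qed



lemma half_step:
  assumes IH: "\<And>D' F'. card D' < card D \<Longrightarrow> D' \<subseteq> Pow X \<Longrightarrow> ample X D' \<Longrightarrow> VCle X 2 D' \<Longrightarrow>
      F' \<subseteq> D' \<Longrightarrow> F' \<noteq> D' \<Longrightarrow> ample X F' \<Longrightarrow> VCle X 1 F' \<Longrightarrow> \<exists>c\<in>D' - F'. corner X D' c"
    and fX: "finite X" and DP: "D \<subseteq> Pow X" and amp: "ample X D" and vc: "VCle X 2 D"
    and HD: "half x s D \<noteq> D"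
    and G: "G \<subseteq> bd x s D" "G \<noteq> half x s D" "ample X G" "VCle X 1 G"
  shows "\<exists>h \<in> half x s D - G. corner X D h"
proof -
  define H where "H = half x s D"
  have fD: "finite D" using fX DP by (meson finite_Pow_iff finite_subset)
  have HsD: "H \<subseteq> D" unfolding H_def by (rule half_sub)
  have cH: "card H < card D" using psubset_card_mono[OF fD] HsD HD unfolding H_def by blast
  have HP: "H \<subseteq> Pow X" using HsD DP by blast
  have aH: "ample X H" unfolding H_def by (rule ample_half[OF fX DP amp])
  have vH: "VCle X 2 H" using VCle_mono[OF vc HsD] .
  have bH: "bd x s D \<subseteq> H" unfolding H_def by (rule bd_sub)
  show ?thesis
  proof (cases "bd x s D = H")
    case True
    have "G \<subseteq> H" using G(1) True by simp
    then obtain h where h: "h \<in> H - G" "corner X H h"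
      using IH[OF cH HP aH vH _ _ G(3,4)] G(2) unfolding H_def by blast
    have "\<And>d. d \<in> half x s D \<Longrightarrow> flip x d \<in> D"
    proof -
      fix d assume "d \<in> half x s D"
      then have "d \<in> bd x s D" using True unfolding H_def by simp
      then show "flip x d \<in> D" unfolding bd_def by simp
    qed
    moreover have hc: "corner X (half x s D) h" using h(2) unfolding H_def .
    ultimately have "corner X D h" using corner_CT2[OF DP hc] by blast
    then show ?thesis using h(1) unfolding H_def by blast
  next
    case False
    have "ample X (bd x s D)" by (rule ample_bd[OF fX DP amp])
    moreover have "VCle X 1 (bd x s D)" by (rule VC_bd[OF fX DP vc])
    ultimately obtain h where h: "h \<in> H - bd x s D" "corner X H h"
      using IH[OF cH HP aH vH bH False] by blast
    have "flip x h \<notin> D"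
    proof
      assume "flip x h \<in> D"
      moreover have "h \<in> D" "(x \<in> h) = s" using h(1) HsD unfolding H_def half_def by auto
      ultimately have "h \<in> bd x s D" unfolding bd_def by simp
      then show False using h(1) by blast
    qed
    have hc: "corner X (half x s D) h" using h(2) unfolding H_def .
    have "corner X D h" by (rule corner_CT1[OF hc \<open>flip x h \<notin> D\<close>])
    moreover have "h \<notin> G" using h(1) G(1) by blast
    ultimately show ?thesis using h(1) unfolding H_def by blast
  qed
qed

lemma corner_outside:
  assumes fX: "finite X"
  shows "D \<subseteq> Pow X \<Longrightarrow> ample X D \<Longrightarrow> VCle X 2 D \<Longrightarrow> F \<subseteq> D \<Longrightarrow> F \<noteq> D \<Longrightarrow> ample X F \<Longrightarrow>
    VCle X 1 F \<Longrightarrow> \<exists>c\<in>D - F. corner X D c"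
proof (induction "card D" arbitrary: D F rule: less_induct)
  case less
  note IH = less.hyps
  have DP: "D \<subseteq> Pow X" and amp: "ample X D" and vc: "VCle X 2 D" and FD: "F \<subseteq> D" and FnD: "F \<noteq> D"
    and aF: "ample X F" and vF: "VCle X 1 F" using less.prems by auto
  have fD: "finite D" using fX DP by (meson finite_Pow_iff finite_subset)
  show ?case
  proof (cases "\<exists>f. F \<subseteq> {f}")
    case True
    obtain f where fD': "f \<in> D" and Ff: "F \<subseteq> {f}"
    proof (cases "F = {}")
      case True
      then obtain f where "f \<in> D" using FnD by blast
      then show ?thesis using that True by blast
    next
      case False
      then obtain f where "F = {f}" using \<open>\<exists>f. F \<subseteq> {f}\<close> by blast
      then show ?thesis using that FD by blast
    qed
    show ?thesis
    proof (cases "D = {f}")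
      case True
      then have "F = {}" using Ff FnD FD by blast
      moreover have "f \<subseteq> X" using fD' DP by blast
      ultimately show ?thesis using corner_single[of f X] True by blast
    next
      case False
      then obtain a where a: "a \<in> D" "a \<noteq> f" using fD' by blast
      then obtain x where x: "x \<in> (a - f) \<union> (f - a)" by blast
      define s where "s = (x \<in> a)"
      have fs: "(x \<in> f) \<noteq> s" using x unfolding s_def by blast
      have aH: "a \<in> half x s D" unfolding half_def s_def using a by simp
      have fH: "f \<notin> half x s D" unfolding half_def using fs by simp
      have HD: "half x s D \<noteq> D" using fH fD' by blast
      have "\<exists>h \<in> half x s D - {}. corner X D h"
        by (rule half_step[OF IH fX DP amp vc HD _ _ ample_empty VC_empty]) (use aH in auto)
      then obtain h where h: "h \<in> half x s D" "corner X D h" by blast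
      have "h \<noteq> f" using h(1) fH by blast
      then have "h \<notin> F" using Ff by blast
      moreover have "h \<in> D" using h(1) half_sub[of x s D] by blast
      ultimately show ?thesis using h(2) by blast
    qed
  next
    case False
    have FP: "F \<subseteq> Pow X" using FD DP by blast
    obtain f x where f: "f \<in> F" "flip x f \<in> F" "half x (x \<in> f) F = {f}"
      using tree_leaf[OF fX FP aF vF False] by blast
    define s where "s = (x \<in> f)"
    define H where "H = half x s D"
    have fD2: "f \<in> D" "flip x f \<in> D" using f FD by auto
    have FH: "\<And>g. g \<in> F \<Longrightarrow> g \<in> H \<Longrightarrow> g = f"
    proof -
      fix g assume "g \<in> F" "g \<in> H"
      then have "g \<in> half x (x \<in> f) F" unfolding H_def s_def half_def by simp
      then show "g = f" using f(3) by simp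
    qed
    have fH: "f \<in> H" unfolding H_def half_def s_def using fD2 by simp
    have ffH: "flip x f \<notin> H" unfolding H_def half_def s_def using flip_in[of x f] by simp
    have HD: "H \<noteq> D" using ffH fD2 by blast
    have fbd: "f \<in> bd x s D" unfolding bd_def s_def using fD2 by simp
    show ?thesis
    proof (cases "H = {f}")
      case False
      have fX': "f \<subseteq> X" using fD2 DP by blast
      have "\<exists>h \<in> half x s D - {f}. corner X D h"
        by (rule half_step[OF IH fX DP amp vc HD[unfolded H_def] _ _ ample_single[OF fX'] VC_single])
           (use fbd False in \<open>auto simp: H_def\<close>)
      then obtain h where h: "h \<in> H" "h \<noteq> f" "corner X D h" unfolding H_def by blast
      have "h \<notin> F" using FH h by blast
      moreover have "h \<in> D" using h(1) half_sub[of x s D] unfolding H_def by blast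
      ultimately show ?thesis using h(3) by blast
    next
      case True
      have Hf: "half x s D = {f}" using True unfolding H_def .
      have cf: "corner X D f" by (rule leaf_corner[OF DP Hf fD2(2)])
      define D' where "D' = D - {f}"
      define F' where "F' = F - {f}"
      have aD': "ample X D'" unfolding D'_def by (rule corner_remove[OF fX DP amp cf])
      have F'eq: "F' = half x (\<not> s) F"
      proof
        show "F' \<subseteq> half x (\<not> s) F"
        proof
          fix g assume g: "g \<in> F'"
          then have gF: "g \<in> F" "g \<noteq> f" unfolding F'_def by auto
          have "(x \<in> g) \<noteq> s"
          proof
            assume "(x \<in> g) = s"
            then have "g \<in> H" using gF FD unfolding H_def half_def by auto
            then show False using FH gF by blast
          qed
          then show "g \<in> half x (\<not> s) F" unfolding half_def using gF by simp
        qed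
        show "half x (\<not> s) F \<subseteq> F'"
          unfolding half_def F'_def s_def by auto
      qed
      have aF': "ample X F'" unfolding F'eq by (rule ample_half[OF fX FP aF])
      have D'P: "D' \<subseteq> Pow X" unfolding D'_def using DP by blast
      have vD': "VCle X 2 D'" unfolding D'_def using VCle_mono[OF vc] by blast
      have vF': "VCle X 1 F'" unfolding F'_def using VCle_mono[OF vF] by blast
      have F'D': "F' \<subseteq> D'" unfolding F'_def D'_def using FD by blast
      have F'nD': "F' \<noteq> D'"
      proof
        assume "F' = D'"
        then have "F = D" unfolding F'_def D'_def using f(1) fD2(1) by blast
        then show False using FnD by simp
      qed
      have cD': "card D' < card D" unfolding D'_def using card_Diff1_less[OF fD fD2(1)] .
      obtain c where c: "c \<in> D' - F'" "corner X D' c"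
        using IH[OF cD' D'P aD' vD' F'D' F'nD' aF' vF'] by blast
      have cf1: "c \<noteq> f" using c(1) unfolding D'_def by blast
      have cf2: "c \<noteq> flip x f" using c(1) f(2) flip_neq[of x f] unfolding F'_def by blast
      have "corner X D c"
      proof (rule corner_lift[of X D f c x])
        show "corner X (D - {f}) c" using c(2) unfolding D'_def .
        show "c \<noteq> f" by fact
        show "c \<noteq> flip x f" by fact
        fix Y T assume "T \<subseteq> X - Y" "cube Y T \<subseteq> D" "f \<in> cube Y T"
        then show "cube Y T \<subseteq> cube {x} (f - {x})" by (rule leaf_corner_cubes[OF Hf])
      qed
      moreover have "c \<notin> F" using c(1) cf1 unfolding F'_def by blast
      moreover have "c \<in> D" using c(1) unfolding D'_def by blast
      ultimately show ?thesis by blast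
    qed
  qed
qed



lemma dismantle_gen:
  assumes "finite D" "\<And>E. P E \<Longrightarrow> ample X E" "\<And>E. P E \<Longrightarrow> E \<noteq> {} \<Longrightarrow> \<exists>c\<in>E. P (E - {c})" "P D"
  shows "dismantlable X D"
  using assms(1,4)
proof (induction D rule: finite_psubset_induct)
  case (psubset D)
  show ?case
  proof (cases "D = {}")
    case True
    show ?thesis unfolding dismantlable_def
      by (rule exI[of _ "[]"]) (simp add: True)
  next
    case False
    then obtain c where c: "c \<in> D" "P (D - {c})" using assms(3) psubset.prems by blast
    have "D - {c} \<subset> D" using c(1) by blast
    then have "dismantlable X (D - {c})" using psubset.IH c(2) by blast
    then obtain cs where cs: "distinct cs" "set cs = D - {c}"
      "\<forall>i\<in>{1..length cs}. ample X (set (take i cs))" unfolding dismantlable_def by blast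
    have aD: "ample X D" using assms(2) psubset.prems by blast
    show ?thesis unfolding dismantlable_def
    proof (intro exI[of _ "cs @ [c]"] conjI)
      show "distinct (cs @ [c])" using cs(1,2) by simp
      show "set (cs @ [c]) = D" using cs(2) c(1) by auto
      show "\<forall>i\<in>{1..length (cs @ [c])}. ample X (set (take i (cs @ [c])))"
      proof
        fix i assume i: "i \<in> {1..length (cs @ [c])}"
        show "ample X (set (take i (cs @ [c])))"
        proof (cases "i \<le> length cs")
          case True
          then have "take i (cs @ [c]) = take i cs" by simp
          moreover have "i \<in> {1..length cs}" using i True by simp
          ultimately show ?thesis using cs(3) by simp
        next
          case False
          then have "i = length cs + 1" using i by simp
          then have "take i (cs @ [c]) = cs @ [c]" by simp
          then have "set (take i (cs @ [c])) = D" using cs(2) c(1) by auto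
          then show ?thesis using aD by simp
        qed
      qed
    qed
  qed
qed

lemma ca_ample:
  assumes fX: "finite X" and CP: "C \<subseteq> Pow X" and ca: "cond_antimatroid C"
  shows "ample X C"
  unfolding ample_def
proof (intro allI impI)
  have e: "{} \<in> C" and int: "\<And>c c'. c \<in> C \<Longrightarrow> c' \<in> C \<Longrightarrow> c \<inter> c' \<in> C"
    and ext: "\<And>c c'. c \<in> C \<Longrightarrow> c' \<in> C \<Longrightarrow> ex_pts C c \<subseteq> c' \<Longrightarrow> c \<subseteq> c'"
    using ca unfolding cond_antimatroid_def by auto
  fix Y assume "Y \<subseteq> X \<and> shatters C Y"
  then have Y: "Y \<subseteq> X" and sh: "shatters C Y" by auto
  obtain c0 where c0: "c0 \<in> C" "c0 \<inter> Y = Y" using sh unfolding shatters_iff by blast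
  then have "c0 \<in> C \<and> Y \<subseteq> c0" by blast
  then obtain a where a: "a \<in> C \<and> Y \<subseteq> a" and amin0: "\<And>c. c \<in> C \<and> Y \<subseteq> c \<Longrightarrow> card a \<le> card c"
    using ex_has_least_nat[of "\<lambda>c. c \<in> C \<and> Y \<subseteq> c" c0 card] by blast
  have aC: "a \<in> C" and Ya: "Y \<subseteq> a" using a by auto
  have aX: "a \<subseteq> X" using aC CP by blast
  have fa: "finite a" using aX fX by (rule finite_subset)
  have amin: "\<And>c. c \<in> C \<Longrightarrow> Y \<subseteq> c \<Longrightarrow> a \<subseteq> c"
  proof -
    fix c assume c: "c \<in> C" "Y \<subseteq> c"
    have "a \<inter> c \<in> C" using int[OF aC c(1)] .
    moreover have "Y \<subseteq> a \<inter> c" using Ya c(2) by blast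
    ultimately have "card a \<le> card (a \<inter> c)" using amin0 by blast
    then have "a \<inter> c = a" using card_seteq[OF fa, of "a \<inter> c"] by blast
    then show "a \<subseteq> c" by blast
  qed
  have exY: "ex_pts C a \<subseteq> Y"
  proof
    fix x assume x: "x \<in> ex_pts C a"
    then have xa: "x \<in> a" and ax: "a - {x} \<in> C" unfolding ex_pts_def by auto
    show "x \<in> Y"
    proof (rule ccontr)
      assume "x \<notin> Y"
      then have "Y \<subseteq> a - {x}" using Ya by blast
      then have "a \<subseteq> a - {x}" using amin ax by blast
      then show False using xa by blast
    qed
  qed
  have rem: "\<And>y. y \<in> Y \<Longrightarrow> a - {y} \<in> C"
  proof -
    fix y assume yY: "y \<in> Y"
    have "Y - {y} \<subseteq> Y" by blast
    then obtain c where c: "c \<in> C" "c \<inter> Y = Y - {y}" using sh unfolding shatters_iff by blast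
    define d where "d = c \<inter> a"
    have dC: "d \<in> C" unfolding d_def by (rule int[OF c(1) aC])
    have "y \<notin> d" using c(2) yY unfolding d_def by blast
    then have "\<not> a \<subseteq> d" using yY Ya by blast
    then have "\<not> ex_pts C a \<subseteq> d" using ext[OF aC dC] by blast
    then obtain x where x: "x \<in> ex_pts C a" "x \<notin> d" by blast
    have "x \<in> Y" using x(1) exY by blast
    moreover have "x \<in> a" using x(1) unfolding ex_pts_def by simp
    ultimately have "x \<notin> c" using x(2) unfolding d_def by blast
    then have "x = y" using c(2) \<open>x \<in> Y\<close> by blast
    then show "a - {y} \<in> C" using x(1) unfolding ex_pts_def by simp
  qed
  have remW: "\<And>W. finite W \<Longrightarrow> W \<subseteq> Y \<Longrightarrow> a - W \<in> C"
  proof -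
    fix W :: "'a set" assume "finite W" "W \<subseteq> Y"
    then show "a - W \<in> C"
    proof (induction W rule: finite_induct)
      case empty
      then show ?case using aC by simp
    next
      case (insert w W)
      have "a - insert w W = (a - W) \<inter> (a - {w})" by blast
      moreover have "a - W \<in> C" using insert by blast
      moreover have "a - {w} \<in> C" using rem insert.prems by blast
      ultimately show ?case using int by simp
    qed
  qed
  define T where "T = a - Y"
  have TX: "T \<subseteq> X - Y" unfolding T_def using aX by blast
  have "cube Y T \<subseteq> C"
  proof
    fix e assume "e \<in> cube Y T"
    then have e: "T \<subseteq> e" "e \<subseteq> T \<union> Y" unfolding mem_cube by auto
    have W: "a - e \<subseteq> Y" using e(1) unfolding T_def by blast
    have "finite (a - e)" using fa by simp
    then have "a - (a - e) \<in> C" using remW W by blast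
    moreover have "a - (a - e) = e" using e Ya unfolding T_def by blast
    ultimately show "e \<in> C" by simp
  qed
  then show "\<exists>T. T \<subseteq> X - Y \<and> cube Y T \<subseteq> C" using TX by blast
qed

lemma ca_step:
  assumes fX: "finite X" and CP: "C \<subseteq> Pow X" and ca: "cond_antimatroid C" and ne: "C \<noteq> {}"
  shows "\<exists>c\<in>C. C - {c} = {} \<or> cond_antimatroid (C - {c})"
proof -
  have e: "{} \<in> C" and int: "\<And>c c'. c \<in> C \<Longrightarrow> c' \<in> C \<Longrightarrow> c \<inter> c' \<in> C"
    and ext: "\<And>c c'. c \<in> C \<Longrightarrow> c' \<in> C \<Longrightarrow> ex_pts C c \<subseteq> c' \<Longrightarrow> c \<subseteq> c'"
    using ca unfolding cond_antimatroid_def by auto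
  have fC: "finite C" using fX CP by (meson finite_Pow_iff finite_subset)
  have fin: "\<And>d. d \<in> C \<Longrightarrow> finite d" using CP fX by (meson PowD finite_subset subsetD)
  define m where "m = Max (card ` C)"
  have "m \<in> card ` C" unfolding m_def using fC ne by simp
  then obtain c where cC: "c \<in> C" and cm: "card c = m" by blast
  have mx: "\<And>d. d \<in> C \<Longrightarrow> card d \<le> card c" unfolding cm m_def using fC by simp
  show ?thesis
  proof (cases "C - {c} = {}")
    case True
    then show ?thesis using cC by blast
  next
    case False
    then obtain d0 where d0: "d0 \<in> C" "d0 \<noteq> c" by blast
    have cne: "c \<noteq> {}"
    proof
      assume "c = {}"
      then have "card d0 = 0" using mx[OF d0(1)] by simp
      then have "d0 = {}" using fin[OF d0(1)] by simp
      then show False using d0(2) \<open>c = {}\<close> by simp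
    qed
    have eq_of_sub: "\<And>d. d \<in> C \<Longrightarrow> c \<subseteq> d \<Longrightarrow> d = c"
    proof -
      fix d assume d: "d \<in> C" "c \<subseteq> d"
      have "card d \<le> card c" by (rule mx[OF d(1)])
      then show "d = c" using card_seteq[OF fin[OF d(1)] d(2)] by simp
    qed
    have "cond_antimatroid (C - {c})" unfolding cond_antimatroid_def
    proof (intro conjI ballI impI)
      show "{} \<in> C - {c}" using e cne by blast
      fix c1 c2 assume c1: "c1 \<in> C - {c}" and c2: "c2 \<in> C - {c}"
      have i: "c1 \<inter> c2 \<in> C" using int c1 c2 by blast
      have "c1 \<inter> c2 \<noteq> c"
      proof
        assume "c1 \<inter> c2 = c"
        then have "c \<subseteq> c1" by blast
        then have "c1 = c" using eq_of_sub c1 by blast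
        then show False using c1 by blast
      qed
      then show "c1 \<inter> c2 \<in> C - {c}" using i by blast
    next
      fix c1 c2 assume c1: "c1 \<in> C - {c}" and c2: "c2 \<in> C - {c}" and sub: "ex_pts (C - {c}) c1 \<subseteq> c2"
      have "ex_pts C c1 \<subseteq> ex_pts (C - {c}) c1"
      proof
        fix x assume x: "x \<in> ex_pts C c1"
        then have xc1: "x \<in> c1" and cx: "c1 - {x} \<in> C" unfolding ex_pts_def by auto
        have "c1 - {x} \<noteq> c"
        proof
          assume h: "c1 - {x} = c"
          have "card (c1 - {x}) < card c1" using card_Diff1_less[OF fin[of c1] xc1] c1 by blast
          then show False using h mx[of c1] c1 by simp
        qed
        then show "x \<in> ex_pts (C - {c}) c1" unfolding ex_pts_def using xc1 cx by simp
      qed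
      then show "c1 \<subseteq> c2" using ext[of c1 c2] c1 c2 sub by blast
    qed
    then show ?thesis using cC by blast
  qed
qed

lemma vc_dim_VCle:
  assumes fX: "finite X" and CP: "C \<subseteq> Pow X" and v: "vc_dim X C \<le> 2"
  shows "VCle X 2 C"
  unfolding VCle_def
proof (intro allI impI)
  fix Y assume Y: "Y \<subseteq> X \<and> shatters C Y"
  have fin: "finite {card Y | Y. Y \<subseteq> X \<and> shatters C Y}"
  proof (rule finite_subset[of _ "card ` Pow X"])
    show "{card Y | Y. Y \<subseteq> X \<and> shatters C Y} \<subseteq> card ` Pow X" by blast
    show "finite (card ` Pow X)" using fX by simp
  qed
  have "card Y \<in> {card Y | Y. Y \<subseteq> X \<and> shatters C Y}" using Y by blast
  then have "card Y \<le> vc_dim X C" unfolding vc_dim_def using fin by (rule Max_ge[rotated])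
  then show "card Y \<le> 2" using v by simp
qed



theorem proposition4p7:
  fixes X :: "'a set" and C :: "'a set set"
  assumes "finite X" and "C \<subseteq> Pow X"
  shows "(cond_antimatroid C \<longrightarrow> dismantlable X C)
       \<and> (ample X C \<and> vc_dim X C \<le> 2 \<longrightarrow> dismantlable X C)"
proof
  have fC: "finite C" using assms by (meson finite_Pow_iff finite_subset)
  show "cond_antimatroid C \<longrightarrow> dismantlable X C"
  proof
    assume ca: "cond_antimatroid C"
    let ?P = "\<lambda>E. E \<subseteq> Pow X \<and> (E = {} \<or> cond_antimatroid E)"
    show "dismantlable X C"
    proof (rule dismantle_gen[of C ?P X])
      show "finite C" by fact
      show "?P C" using assms(2) ca by simp
      fix E assume PE: "?P E"
      show "ample X E"
      proof (cases "E = {}")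
        case True
        then show ?thesis using ample_empty by simp
      next
        case False
        then show ?thesis using PE ca_ample[OF assms(1)] by blast
      qed
      assume ne: "E \<noteq> {}"
      then have caE: "cond_antimatroid E" using PE by blast
      obtain c where "c \<in> E" "E - {c} = {} \<or> cond_antimatroid (E - {c})"
        using ca_step[OF assms(1) _ caE ne] PE by blast
      moreover have "E - {c} \<subseteq> Pow X" using PE by blast
      ultimately show "\<exists>c\<in>E. ?P (E - {c})" by blast
    qed
  qed
  show "ample X C \<and> vc_dim X C \<le> 2 \<longrightarrow> dismantlable X C"
  proof
    assume h: "ample X C \<and> vc_dim X C \<le> 2"
    let ?P = "\<lambda>E. E \<subseteq> Pow X \<and> ample X E \<and> VCle X 2 E"
    show "dismantlable X C"
    proof (rule dismantle_gen[of C ?P X])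
      show "finite C" by fact
      show "?P C" using assms(2) h vc_dim_VCle[OF assms] by simp
      fix E assume PE: "?P E"
      then show "ample X E" by simp
      assume ne: "E \<noteq> {}"
      have EP: "E \<subseteq> Pow X" and aE: "ample X E" and vE: "VCle X 2 E" using PE by auto
      have "\<exists>c\<in>E - {}. corner X E c"
        by (rule corner_outside[OF assms(1) EP aE vE _ _ ample_empty VC_empty]) (use ne in auto)
      then obtain c where c: "c \<in> E" "corner X E c" by blast
      have "ample X (E - {c})" by (rule corner_remove[OF assms(1) EP aE c(2)])
      moreover have "VCle X 2 (E - {c})" using VCle_mono[OF vE] by blast
      moreover have "E - {c} \<subseteq> Pow X" using EP by blast
      ultimately show "\<exists>c\<in>E. ?P (E - {c})" using c(1) by blast
    qed
  qed
qed


end
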